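(* Let $(X,\ast,u,d)$ be a finite block GL-rack and $c$ the size of each of its blocks. Then for every oriented Legendrian knot $K$, $\operatorname{Col}_X(K)$ is divisible by $c$.
   Context: A rack is a set $X$ with a binary operation $\ast$ such that for every $y\in X$ the map $x\mapsto x\ast y$ is a bijection of $X$ and $(x\ast y)\ast z=(x\ast z)\ast(y\ast z)$ for all $x,y,z$. A GL-rack is a quadruple $(X,\ast,u,d)$ where $(X,\ast)$ is a rack and $u,d\colon X\to X$ are maps such that for all $x,y\in X$: $u(d(x\ast x))=d(u(x\ast x))=x$; $u(x\ast y)=u(x)\ast y$ and $d(x\ast y)=d(x)\ast y$; $x\ast u(y)=x\ast d(y)=x\ast y$. The diagonal map is $\Delta(x)=x\ast x$; for finite $X$ it is a bijection with $\Delta=(u\circ d)^{-1}$. A finite GL-rack is a block GL-rack if all cycles in the disjoint cycle decomposition of $\Delta$ (fixed points counted as $1$-cycles) have the same length $c$; the supports of these cycles are the blocks. Legendrian knots in $(\mathbb{R}^3,\xi_{\mathrm{std}})$ are represented by oriented front diagrams. Given a finite GL-rack $X$ and a front diagram $D$ of $K$, a coloring is an assignment of elements of $X$ to the semi-arcs of $D$ (segments bounded by undercrossings or cusps) such that, following the orientation through a cusp, the color changes from $x$ to $u(x)$ if the cusp is traversed upward and to $d(x)$ if traversed downward; and at each crossing whose over-strand is colored $y$, if the under semi-arc on the right of the oriented over-strand is colored $x$, the one on its left is colored $x\ast y$. $\operatorname{Col}_X(K)$ is the number of colorings (a Legendrian isotopy invariant, equal to $|\operatorname{Hom}(\operatorname{GLR}(K),X)|$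 for the fundamental GL-rack $\operatorname{GLR}(K)$). *)

theory Defs
  imports Main
begin

definition rack :: "('a \<Rightarrow> 'a \<Rightarrow> 'a) \<Rightarrow> bool" where
  "rack op \<longleftrightarrow> (\<forall>y. bij (\<lambda>x. op x y)) \<and>
     (\<forall>x y z. op (op x y) z = op (op x z) (op y z))"

definition GL_rack :: "('a \<Rightarrow> 'a \<Rightarrow> 'a) \<Rightarrow> ('a \<Rightarrow> 'a) \<Rightarrow> ('a \<Rightarrow> 'a) \<Rightarrow> bool" where
  "GL_rack op u d \<longleftrightarrow> rack op \<and>
     (\<forall>x. u (d (op x x)) = x \<and> d (u (op x x)) = x) \<and>
     (\<forall>x y. u (op x y) = op (u x) y \<and> d (op x y) = op (d x) y) \<and>
     (\<forall>x y. op x (u y) = op x y \<and> op x (d y) = op x y)"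

definition diag :: "('a \<Rightarrow> 'a \<Rightarrow> 'a) \<Rightarrow> 'a \<Rightarrow> 'a" where
  "diag op x = op x x"

definition diag_cycle_length :: "('a \<Rightarrow> 'a \<Rightarrow> 'a) \<Rightarrow> 'a \<Rightarrow> nat" where
  "diag_cycle_length op x = card (range (\<lambda>k. (diag op ^^ k) x))"

text \<open>A (finite) block GL-rack whose blocks (cycles of the diagonal) all have size c.\<close>
definition block_GL_rack ::
  "('a::finite \<Rightarrow> 'a \<Rightarrow> 'a) \<Rightarrow> ('a \<Rightarrow> 'a) \<Rightarrow> ('a \<Rightarrow> 'a) \<Rightarrow> nat \<Rightarrow> bool" where
  "block_GL_rack op u d c \<longleftrightarrow> GL_rack op u d \<and> (\<forall>x. diag_cycle_length op x = c)"

text \<open>Traversing an oriented front diagram of a knot once, starting at some point,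
  one meets a cyclic sequence of events: a cusp traversed upward, a cusp traversed
  downward, passing over crossing k, or passing under crossing k.\<close>
datatype front_event = CuspUp | CuspDown | Over nat | Under nat

definition front_code :: "front_event list \<Rightarrow> bool" where
  "front_code ev \<longleftrightarrow> ev \<noteq> [] \<and> (CuspUp \<in> set ev \<or> CuspDown \<in> set ev) \<and>
     (\<forall>k. length (filter (\<lambda>e. e = Over k) ev) \<le> 1 \<and>
          length (filter (\<lambda>e. e = Under k) ev) \<le> 1 \<and>
          (Over k \<in> set ev \<longleftrightarrow> Under k \<in> set ev))"

text \<open>A coloring assigns to each event position i the color of the strand just after
  event i (so positions between two consecutive undercrossings/cusps carry the color
  of that semi-arc). rl k means: at crossing k the under-strand passes from the
  right of the oriented over-strand to its left.\<close>
definition front_coloring ::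
  "('a \<Rightarrow> 'a \<Rightarrow> 'a) \<Rightarrow> ('a \<Rightarrow> 'a) \<Rightarrow> ('a \<Rightarrow> 'a) \<Rightarrow> front_event list \<Rightarrow> (nat \<Rightarrow> bool)
    \<Rightarrow> 'a list \<Rightarrow> bool" where
  "front_coloring op u d ev rl cs \<longleftrightarrow> length cs = length ev \<and>
     (\<forall>i < length ev. let p = cs ! ((i + length ev - 1) mod length ev) in
        (case ev ! i of
           CuspUp \<Rightarrow> cs ! i = u p
         | CuspDown \<Rightarrow> cs ! i = d p
         | Over k \<Rightarrow> cs ! i = p
         | Under k \<Rightarrow> (\<forall>j < length ev. ev ! j = Over k \<longrightarrow>
              (if rl k then cs ! i = op p (cs ! j) else p = op (cs ! i) (cs ! j)))))"

definition Col ::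
  "('a \<Rightarrow> 'a \<Rightarrow> 'a) \<Rightarrow> ('a \<Rightarrow> 'a) \<Rightarrow> ('a \<Rightarrow> 'a) \<Rightarrow> front_event list \<Rightarrow> (nat \<Rightarrow> bool) \<Rightarrow> nat" where
  "Col op u d ev rl = card {cs. front_coloring op u d ev rl cs}"

end

theory Submission
  imports Defs
begin

lemma period_aux:
  fixes f :: "'a::finite \<Rightarrow> 'a"
  assumes "inj f"
  shows "(f ^^ card (range (\<lambda>k. (f^^k) x))) x = x \<and>
         (\<forall>k. 0 < k \<longrightarrow> k < card (range (\<lambda>k. (f^^k) x)) \<longrightarrow> (f^^k) x \<noteq> x)"
proof -
  define P where "P = (LEAST n. 0 < n \<and> (f^^n) x = x)"
  obtain n where n: "n > 0" "(f ^^ n) x = x"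
    using funpow_inj_finite[OF assms, of x] by auto
  have P: "0 < P \<and> (f^^P) x = x" unfolding P_def
    by (rule LeastI[of _ n]) (use n in auto)
  have Pmin: "(f^^k) x \<noteq> x" if "0 < k" "k < P" for k
    using not_less_Least[of k "\<lambda>n. 0 < n \<and> (f^^n) x = x"] that unfolding P_def by auto
  have R: "range (\<lambda>k. (f^^k) x) = (\<lambda>k. (f^^k) x) ` {..<P}"
  proof
    show "range (\<lambda>k. (f^^k) x) \<subseteq> (\<lambda>k. (f^^k) x) ` {..<P}"
    proof
      fix y assume "y \<in> range (\<lambda>k. (f^^k) x)"
      then obtain m where "y = (f^^m) x" by auto
      then have "y = (f^^(m mod P)) x" using funpow_mod_eq[where f=f and n=P and x=x and m=m] P by simp
      moreover have "m mod P < P" using P by simp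
      ultimately show "y \<in> (\<lambda>k. (f^^k) x) ` {..<P}" by auto
    qed
  qed auto
  have inj: "inj_on (\<lambda>k. (f^^k) x) {..<P}"
  proof (rule linorder_inj_onI')
    fix i j assume ij0: "i \<in> {..<P}" "j \<in> {..<P}" "i < j"
    show "(f^^i) x \<noteq> (f^^j) x"
    proof
    assume eq: "(f^^i) x = (f^^j) x"
    have ij: "i < j" "i \<in> {..<P}" "j \<in> {..<P}" "(f^^i) x = (f^^j) x" using ij0 eq by auto
    have "(f^^j) x = (f^^i) ((f^^(j-i)) x)"
      using ij(1) by (simp add: funpow_add[symmetric, THEN fun_cong, simplified comp_def])
    then have "(f^^i) ((f^^(j-i)) x) = (f^^i) x" using ij by simp
    then have "(f^^(j-i)) x = x" using inj_fn[OF assms, of i] by (simp add: inj_eq)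
    moreover have "j - i < P" "0 < j - i" using ij by auto
    ultimately show False using Pmin[of "j-i"] by auto
    qed
  qed
  have "card (range (\<lambda>k. (f^^k) x)) = P" using R inj by (simp add: card_image)
  then show ?thesis using P Pmin by auto
qed

lemma dvd_card_perm:
  fixes g :: "'b \<Rightarrow> 'b"
  assumes fin: "finite S" and cl: "\<And>s. s \<in> S \<Longrightarrow> g s \<in> S"
    and per: "\<And>s. (g^^c) s = s"
    and np: "\<And>s k. s \<in> S \<Longrightarrow> 0 < k \<Longrightarrow> k < c \<Longrightarrow> (g^^k) s \<noteq> s"
    and c0: "0 < c"
  shows "c dvd card S"
proof -
  have inj: "inj g"
  proof (rule injI)
    fix x y assume "g x = g y"
    then have "(g^^(c-1)) (g x) = (g^^(c-1)) (g y)" by simp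
    moreover have "(g^^(c-1)) (g z) = z" for z
      using per[of z] c0 by (metis Suc_diff_1 funpow_Suc_right o_apply)
    ultimately show "x = y" by simp
  qed
  have clk: "(g^^k) s \<in> S" if "s \<in> S" for s k
    using that by (induction k) (auto intro: cl)
  define Orb where "Orb s = (\<lambda>k. (g^^k) s) ` {..<c}" for s
  have OS: "Orb s \<subseteq> S" if "s \<in> S" for s using clk that unfolding Orb_def by auto
  have sO: "s \<in> Orb s" for s unfolding Orb_def using c0 by force
  have cardO: "card (Orb s) = c" if "s \<in> S" for s
  proof -
    have "inj_on (\<lambda>k. (g^^k) s) {..<c}"
    proof (rule linorder_inj_onI')
      fix i j assume ij0: "i \<in> {..<c}" "j \<in> {..<c}" "i < j"
      show "(g^^i) s \<noteq> (g^^j) s"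
      proof
      assume eq: "(g^^i) s = (g^^j) s"
      have ij: "i < j" "i \<in> {..<c}" "j \<in> {..<c}" "(g^^i) s = (g^^j) s" using ij0 eq by auto
      have "(g^^j) s = (g^^i) ((g^^(j-i)) s)"
        using ij(1) by (simp add: funpow_add[symmetric, THEN fun_cong, simplified comp_def])
      then have "(g^^i) ((g^^(j-i)) s) = (g^^i) s" using ij by simp
      then have "(g^^(j-i)) s = s" using inj_fn[OF inj, of i] by (simp add: inj_eq)
      moreover have "j - i < c" "0 < j - i" using ij by auto
      ultimately show False using np[OF that, of "j-i"] by auto
      qed
    qed
    then show ?thesis unfolding Orb_def by (simp add: card_image)
  qed
  have Oshift: "Orb ((g^^i) s) = Orb s" if "s \<in> S" for s i
  proof -
    have "Orb ((g^^i) s) \<subseteq> Orb s"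
    proof
      fix y assume "y \<in> Orb ((g^^i) s)"
      then obtain k where "y = (g^^k) ((g^^i) s)" unfolding Orb_def by auto
      then have "y = (g^^(k+i)) s" by (simp add: funpow_add)
      then have "y = (g^^((k+i) mod c)) s" using funpow_mod_eq[where f=g and n=c and x=s and m="k+i"] per by simp
      then show "y \<in> Orb s" unfolding Orb_def using c0 by auto
    qed
    moreover have "finite (Orb s)" unfolding Orb_def by simp
    moreover have "card (Orb ((g^^i) s)) = card (Orb s)"
      using cardO that clk by simp
    ultimately show ?thesis by (simp add: card_subset_eq)
  qed
  have "c * card (Orb ` S) = card (\<Union>(Orb ` S))"
  proof (rule card_partition)
    show "finite (Orb ` S)" using fin by simp
    show "finite (\<Union>(Orb ` S))" using fin unfolding Orb_def by simp
    show "\<And>x. x \<in> Orb ` S \<Longrightarrow> card x = c" using cardO by auto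
    show "\<And>c1 c2. c1 \<in> Orb ` S \<Longrightarrow> c2 \<in> Orb ` S \<Longrightarrow> c1 \<noteq> c2 \<Longrightarrow> c1 \<inter> c2 = {}"
    proof -
      fix c1 c2 assume a: "c1 \<in> Orb ` S" "c2 \<in> Orb ` S" "c1 \<noteq> c2"
      then obtain s1 s2 where s: "s1 \<in> S" "s2 \<in> S" "c1 = Orb s1" "c2 = Orb s2" by auto
      show "c1 \<inter> c2 = {}"
      proof (rule ccontr)
        assume "c1 \<inter> c2 \<noteq> {}"
        then obtain t where "t \<in> Orb s1" "t \<in> Orb s2" using s by auto
        then obtain i j where "t = (g^^i) s1" "t = (g^^j) s2" unfolding Orb_def by blast
        then have "Orb s1 = Orb s2" using Oshift s by metis
        then show False using a s by simp
      qed
    qed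
  qed
  moreover have "\<Union>(Orb ` S) = S" using OS sO by auto
  ultimately have "card S = c * card (Orb ` S)" by simp
  then show ?thesis by (rule dvdI)
qed

lemma map_funpow: "((map (f::'c \<Rightarrow> 'c))^^k) xs = map (f^^k) xs"
  by (induction k) (simp_all add: comp_def)

theorem corollary3p12:
  fixes op :: "'a::finite \<Rightarrow> 'a \<Rightarrow> 'a" and u d :: "'a \<Rightarrow> 'a" and c :: nat
    and ev :: "front_event list" and rl :: "nat \<Rightarrow> bool"
  assumes "block_GL_rack op u d c"
    and "front_code ev"
  shows "c dvd Col op u d ev rl"
proof -
  define D where "D = diag op"
  have GL: "GL_rack op u d" and cyc: "\<And>x. diag_cycle_length op x = c"
    using assms(1) unfolding block_GL_rack_def by auto
  have rk: "rack op" using GL unfolding GL_rack_def by auto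
  have bij: "\<And>y. bij (\<lambda>x. op x y)" and dist: "\<And>x y z. op (op x y) z = op (op x z) (op y z)"
    using rk unfolding rack_def by blast+
  have ud: "\<And>x. u (d (op x x)) = x" and uop: "\<And>x y. u (op x y) = op (u x) y"
    and dop: "\<And>x y. d (op x y) = op (d x) y"
    and opu: "\<And>x y. op x (u y) = op x y" and opd: "\<And>x y. op x (d y) = op x y"
    using GL unfolding GL_rack_def by blast+
  have injD: "inj D"
  proof (rule injI)
    fix x y assume "D x = D y"
    then have "u (d (op x x)) = u (d (op y y))" unfolding D_def diag_def by simp
    then show "x = y" by (simp only: ud)
  qed
  have opsq: "op b (op y y) = op b y" for b y
  proof -
    obtain a where "b = op a y" using bij[of y] by (metis bij_pointE)
    then show ?thesis using dist[of a y y] by simp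
  qed
  have Dop: "D (op x y) = op (D x) (D y)" for x y
    unfolding D_def diag_def using dist[of x x y] opsq by simp
  have Du: "D (u x) = u (D x)" for x
    unfolding D_def diag_def using uop[of x x] opu[of "u x" x] by simp
  have Dd: "D (d x) = d (D x)" for x
    unfolding D_def diag_def using dop[of x x] opd[of "d x" x] by simp
  have pa: "(D ^^ c) x = x \<and> (\<forall>k. 0 < k \<longrightarrow> k < c \<longrightarrow> (D^^k) x \<noteq> x)" for x
    using period_aux[OF injD, of x] cyc[of x] unfolding diag_cycle_length_def D_def by simp
  have c0: "0 < c"
  proof -
    have "card (range (\<lambda>k. (D^^k) (undefined::'a))) > 0"
      by (simp add: card_gt_0_iff)
    then show ?thesis using cyc[of undefined] unfolding diag_cycle_length_def D_def by simp
  qed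
  have evne: "ev \<noteq> []" using assms(2) unfolding front_code_def by auto
  define S where "S = {cs. front_coloring op u d ev rl cs}"
  have finS: "finite S"
  proof (rule finite_subset)
    show "S \<subseteq> {cs. set cs \<subseteq> UNIV \<and> length cs = length ev}"
      unfolding S_def front_coloring_def by auto
    show "finite {cs. set cs \<subseteq> (UNIV::'a set) \<and> length cs = length ev}"
      by (rule finite_lists_length_eq) simp
  qed
  have cl: "map D cs \<in> S" if "cs \<in> S" for cs
  proof -
    let ?n = "length ev"
    have len: "length cs = ?n" and H: "\<And>i. i < ?n \<Longrightarrow> (let p = cs ! ((i + ?n - 1) mod ?n) in
        (case ev ! i of
           CuspUp \<Rightarrow> cs ! i = u p
         | CuspDown \<Rightarrow> cs ! i = d p
         | Over k \<Rightarrow> cs ! i = p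
         | Under k \<Rightarrow> (\<forall>j < ?n. ev ! j = Over k \<longrightarrow>
              (if rl k then cs ! i = op p (cs ! j) else p = op (cs ! i) (cs ! j)))))"
      using that unfolding S_def front_coloring_def by auto
    have npos: "0 < ?n" using evne by simp
    show ?thesis unfolding S_def front_coloring_def
    proof (intro CollectI conjI allI impI)
      show "length (map D cs) = ?n" using len by simp
      fix i assume i: "i < ?n"
      define q where "q = (i + ?n - 1) mod ?n"
      have q: "q < ?n" unfolding q_def using npos by simp
      have Hi: "case ev ! i of
           CuspUp \<Rightarrow> cs ! i = u (cs ! q)
         | CuspDown \<Rightarrow> cs ! i = d (cs ! q)
         | Over k \<Rightarrow> cs ! i = cs ! q
         | Under k \<Rightarrow> (\<forall>j < ?n. ev ! j = Over k \<longrightarrow>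
              (if rl k then cs ! i = op (cs ! q) (cs ! j) else cs ! q = op (cs ! i) (cs ! j)))"
        using H[OF i] unfolding q_def Let_def by simp
      have "case ev ! i of
           CuspUp \<Rightarrow> map D cs ! i = u (map D cs ! q)
         | CuspDown \<Rightarrow> map D cs ! i = d (map D cs ! q)
         | Over k \<Rightarrow> map D cs ! i = map D cs ! q
         | Under k \<Rightarrow> (\<forall>j < ?n. ev ! j = Over k \<longrightarrow>
              (if rl k then map D cs ! i = op (map D cs ! q) (map D cs ! j)
               else map D cs ! q = op (map D cs ! i) (map D cs ! j)))"
      proof (cases "ev ! i")
        case CuspUp then show ?thesis using Hi i q len Du by simp
      next
        case CuspDown then show ?thesis using Hi i q len Dd by simp
      next
        case (Over k) then show ?thesis using Hi i q len by simp
      next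
        case (Under k) then show ?thesis using Hi i q len Dop by auto
      qed
      then show "let p = map D cs ! ((i + ?n - 1) mod ?n) in
        (case ev ! i of
           CuspUp \<Rightarrow> map D cs ! i = u p
         | CuspDown \<Rightarrow> map D cs ! i = d p
         | Over k \<Rightarrow> map D cs ! i = p
         | Under k \<Rightarrow> (\<forall>j < ?n. ev ! j = Over k \<longrightarrow>
              (if rl k then map D cs ! i = op p (map D cs ! j) else p = op (map D cs ! i) (map D cs ! j))))"
        unfolding q_def Let_def by simp
    qed
  qed
  have per: "((map D)^^c) cs = cs" for cs
    unfolding map_funpow using pa by (simp add: map_idI)
  have np: "((map D)^^k) cs \<noteq> cs" if "cs \<in> S" "0 < k" "k < c" for cs k
  proof
    assume e: "((map D)^^k) cs = cs"
    have "cs \<noteq> []" using that(1) evne unfolding S_def front_coloring_def by auto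
    then obtain a r where "cs = a # r" by (cases cs) auto
    then have "(D^^k) a = a" using e unfolding map_funpow by simp
    then show False using pa that by auto
  qed
  have "c dvd card S" by (rule dvd_card_perm[OF finS cl per np c0])
  then show ?thesis unfolding Col_def S_def by simp
qed

end
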